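(* Let $A_1=P(s_1,\dots,s_k)$ and $A_2=P(r_1,\dots,r_k)$ be non-ground, simple and covering atoms, each containing at least one compound term, and suppose $A_1$ and $A_2$ are unifiable. Then for every position $j\in\{1,\dots,k\}$, $s_j$ is a compound term if and only if $r_j$ is a compound term.
   Context: A compound term is a term that is neither a variable nor a constant. $\mathrm{Var}(E)$ denotes the set of variables of $E$. A literal is simple if each argument is a variable, a constant, or a term $f(u_1,\dots,u_n)$ with each $u_i$ a variable or a constant. A literal (or clause) $E$ is covering if every compound term $t$ occurring in $E$ satisfies $\mathrm{Var}(t)=\mathrm{Var}(E)$. *)

theory Defs
  imports Main
begin

text \<open>First-order terms over function symbols 'f and variables 'v.
  Constants are function symbols applied to the empty argument list.\<close>

datatype ('f, 'v) trm = Var 'v | Fn 'f "('f, 'v) trm list"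

datatype ('p, 'f, 'v) atom = Atom 'p "('f, 'v) trm list"

fun vars_trm :: "('f, 'v) trm \<Rightarrow> 'v set" where
  "vars_trm (Var x) = {x}"
| "vars_trm (Fn f ts) = (\<Union>t\<in>set ts. vars_trm t)"

fun subterms :: "('f, 'v) trm \<Rightarrow> ('f, 'v) trm set" where
  "subterms (Var x) = {Var x}"
| "subterms (Fn f ts) = insert (Fn f ts) (\<Union>t\<in>set ts. subterms t)"

fun subst_trm :: "('v \<Rightarrow> ('f, 'v) trm) \<Rightarrow> ('f, 'v) trm \<Rightarrow> ('f, 'v) trm" where
  "subst_trm \<sigma> (Var x) = \<sigma> x"
| "subst_trm \<sigma> (Fn f ts) = Fn f (map (subst_trm \<sigma>) ts)"

fun atom_args :: "('p, 'f, 'v) atom \<Rightarrow> ('f, 'v) trm list" where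
  "atom_args (Atom p ts) = ts"

fun subst_atom :: "('v \<Rightarrow> ('f, 'v) trm) \<Rightarrow> ('p, 'f, 'v) atom \<Rightarrow> ('p, 'f, 'v) atom" where
  "subst_atom \<sigma> (Atom p ts) = Atom p (map (subst_trm \<sigma>) ts)"

definition is_var :: "('f, 'v) trm \<Rightarrow> bool" where
  "is_var t \<longleftrightarrow> (\<exists>x. t = Var x)"

definition is_const :: "('f, 'v) trm \<Rightarrow> bool" where
  "is_const t \<longleftrightarrow> (\<exists>c. t = Fn c [])"

definition is_compound :: "('f, 'v) trm \<Rightarrow> bool" where
  "is_compound t \<longleftrightarrow> \<not> is_var t \<and> \<not> is_const t"

definition vars_atom :: "('p, 'f, 'v) atom \<Rightarrow> 'v set" where
  "vars_atom A = (\<Union>t\<in>set (atom_args A). vars_trm t)"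

definition subterms_atom :: "('p, 'f, 'v) atom \<Rightarrow> ('f, 'v) trm set" where
  "subterms_atom A = (\<Union>t\<in>set (atom_args A). subterms t)"

definition ground_atom :: "('p, 'f, 'v) atom \<Rightarrow> bool" where
  "ground_atom A \<longleftrightarrow> vars_atom A = {}"

definition simple_atom :: "('p, 'f, 'v) atom \<Rightarrow> bool" where
  "simple_atom A \<longleftrightarrow> (\<forall>t\<in>set (atom_args A).
      is_var t \<or> is_const t \<or>
      (\<exists>f us. t = Fn f us \<and> (\<forall>u\<in>set us. is_var u \<or> is_const u)))"

definition covering_atom :: "('p, 'f, 'v) atom \<Rightarrow> bool" where
  "covering_atom A \<longleftrightarrow> (\<forall>t\<in>subterms_atom A. is_compound t \<longrightarrow> vars_trm t = vars_atom A)"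

definition unifiable_atoms :: "('p, 'f, 'v) atom \<Rightarrow> ('p, 'f, 'v) atom \<Rightarrow> bool" where
  "unifiable_atoms A B \<longleftrightarrow> (\<exists>\<sigma>. subst_atom \<sigma> A = subst_atom \<sigma> B)"

end

theory Submission
  imports Defs
begin

fun dep :: "('f, 'v) trm \<Rightarrow> nat" where
  "dep (Var x) = 0"
| "dep (Fn f ts) = (if ts = [] then 0 else Suc (Max (insert 0 (dep ` set ts))))"

lemma dep_lt: "t \<in> set ts \<Longrightarrow> dep t < dep (Fn f ts)"
  by (auto simp add: le_imp_less_Suc)

lemma dep_le: "(\<forall>t\<in>set ts. dep t \<le> m) \<Longrightarrow> dep (Fn f ts) \<le> Suc m"
  by simp

lemma subterm_self: "t \<in> subterms t"
  by (cases t) auto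

lemma vc_vars:
  assumes "\<forall>u\<in>set us. is_var u \<or> is_const u" "y \<in> vars_trm (Fn f us)"
  shows "Var y \<in> set us"
  using assms by (auto simp: is_var_def is_const_def)

lemma simple_sub:
  assumes "is_var r \<or> is_const r \<or> (\<exists>f us. r = Fn f us \<and> (\<forall>u\<in>set us. is_var u \<or> is_const u))"
    and "t \<in> subterms r" "is_compound t"
  shows "t = r"
proof -
  have "\<And>u. is_var u \<or> is_const u \<Longrightarrow> t \<in> subterms u \<Longrightarrow> False"
    using assms(3) by (auto simp: is_var_def is_const_def is_compound_def)
  then show ?thesis using assms(1,2) by (auto simp: is_var_def is_const_def is_compound_def) metis
qed

lemma simple_bound:
  assumes "is_var s \<or> is_const s \<or> (\<exists>f us. s = Fn f us \<and> (\<forall>u\<in>set us. is_var u \<or> is_const u))"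
    and "\<forall>y\<in>vars_trm s. Suc (dep (\<sigma> y)) \<le> D" "D \<ge> 1"
  shows "dep (subst_trm \<sigma> s) \<le> D"
proof -
  consider (v) y where "s = Var y" | (c) c where "s = Fn c []"
    | (f) f us where "s = Fn f us" "\<forall>u\<in>set us. is_var u \<or> is_const u"
    using assms(1) by (auto simp: is_var_def is_const_def)
  then show ?thesis
  proof cases
    case v then show ?thesis using assms(2) by auto
  next
    case c then show ?thesis using assms(3) by simp
  next
    case f
    have "\<forall>t\<in>set (map (subst_trm \<sigma>) us). dep t \<le> D - 1"
    proof
      fix t assume "t \<in> set (map (subst_trm \<sigma>) us)"
      then obtain u where u: "u \<in> set us" "t = subst_trm \<sigma> u" by auto
      then have "is_var u \<or> is_const u" using f by auto
      then show "dep t \<le> D - 1"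
      proof
        assume "is_var u"
        then obtain y where "u = Var y" by (auto simp: is_var_def)
        then show ?thesis using u f assms(2) by force
      next
        assume "is_const u" then show ?thesis using u by (auto simp: is_const_def)
      qed
    qed
    then have "dep (Fn f (map (subst_trm \<sigma>) us)) \<le> Suc (D - 1)" by (rule dep_le)
    then show ?thesis using f assms(3) by simp
  qed
qed

lemma asym:
  assumes len: "length ss = length rs"
    and ng: "\<not> ground_atom (Atom P ss)"
    and s1: "simple_atom (Atom P ss)" and s2: "simple_atom (Atom P rs)"
    and c1: "covering_atom (Atom P ss)" and c2: "covering_atom (Atom P rs)"
    and ex2: "\<exists>t\<in>subterms_atom (Atom P rs). is_compound t"
    and eq: "map (subst_trm \<sigma>) ss = map (subst_trm \<sigma>) rs"
    and j: "j < length ss" and cs: "is_compound (ss ! j)"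
  shows "is_compound (rs ! j)"
proof (rule ccontr)
  assume nc: "\<not> is_compound (rs ! j)"
  have ej: "subst_trm \<sigma> (ss ! j) = subst_trm \<sigma> (rs ! j)"
    using eq j len by (metis nth_map)
  have sjin: "ss ! j \<in> set ss" using j by simp
  have rjin: "rs ! j \<in> set rs" using j len by simp
  have "is_var (ss!j) \<or> is_const (ss!j) \<or> (\<exists>f us. ss!j = Fn f us \<and> (\<forall>u\<in>set us. is_var u \<or> is_const u))"
    using s1 sjin by (simp add: simple_atom_def)
  then obtain f us where sj: "ss ! j = Fn f us" "\<forall>u\<in>set us. is_var u \<or> is_const u" "us \<noteq> []"
    using cs by (auto simp: is_compound_def is_const_def)
  consider (v) x where "rs ! j = Var x" | (c) c where "rs ! j = Fn c []"
    using nc s2 rjin by (auto simp: simple_atom_def is_compound_def is_var_def is_const_def)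
  then show False
  proof cases
    case c then show False using ej sj by simp
  next
    case v
    define D where "D = dep (\<sigma> x)"
    have D: "D = dep (subst_trm \<sigma> (ss ! j))" using ej v D_def by simp
    have vs: "vars_trm (ss ! j) = vars_atom (Atom P ss)"
      using c1 sjin cs subterm_self by (fastforce simp: covering_atom_def subterms_atom_def)
    have bnd: "\<forall>y\<in>vars_atom (Atom P ss). Suc (dep (\<sigma> y)) \<le> D"
    proof
      fix y assume "y \<in> vars_atom (Atom P ss)"
      then have "Var y \<in> set us" using vs sj vc_vars by metis
      then have "dep (subst_trm \<sigma> (Var y)) < dep (Fn f (map (subst_trm \<sigma>) us))"
        by (intro dep_lt) (simp add: rev_image_eqI)
      then show "Suc (dep (\<sigma> y)) \<le> D" using D sj by simp
    qed
    have D1: "D \<ge> 1" using D sj by simp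
    obtain t r where t: "r \<in> set rs" "t \<in> subterms r" "is_compound t"
      using ex2 by (auto simp: subterms_atom_def)
    have "is_var r \<or> is_const r \<or> (\<exists>f us. r = Fn f us \<and> (\<forall>u\<in>set us. is_var u \<or> is_const u))"
      using s2 t by (simp add: simple_atom_def)
    note rs = this
    have tr: "t = r" using simple_sub[OF rs t(2,3)] .
    obtain g vs where gv: "r = Fn g vs" "\<forall>u\<in>set vs. is_var u \<or> is_const u"
      using rs t(3) tr by (auto simp: is_compound_def is_var_def)
    have "vars_trm t = vars_atom (Atom P rs)"
      using c2 t by (auto simp: covering_atom_def subterms_atom_def)
    moreover have "x \<in> vars_atom (Atom P rs)" using rjin v by (force simp: vars_atom_def)
    ultimately have "Var x \<in> set vs" using tr gv vc_vars by metis
    then have gt: "D < dep (subst_trm \<sigma> r)"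
      using gv D_def dep_lt[of "\<sigma> x" "map (subst_trm \<sigma>) vs" g] by (simp add: rev_image_eqI)
    obtain i where i: "i < length rs" "rs ! i = r" using t(1) by (metis in_set_conv_nth)
    have ei: "subst_trm \<sigma> (ss ! i) = subst_trm \<sigma> r"
      using eq i len by (metis nth_map)
    have siin: "ss ! i \<in> set ss" using i len by simp
    have "\<forall>y\<in>vars_trm (ss ! i). Suc (dep (\<sigma> y)) \<le> D"
      using bnd siin by (auto simp: vars_atom_def)
    moreover have "is_var (ss!i) \<or> is_const (ss!i) \<or> (\<exists>f us. ss!i = Fn f us \<and> (\<forall>u\<in>set us. is_var u \<or> is_const u))"
      using s1 siin by (simp add: simple_atom_def)
    ultimately have "dep (subst_trm \<sigma> (ss ! i)) \<le> D" using simple_bound D1 by blast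
    then show False using gt ei by simp
  qed
qed

theorem mainTheorem4:
  fixes P :: 'p and ss rs :: "('f, 'v) trm list" and k :: nat
  assumes "length ss = k" and "length rs = k"
    and "\<not> ground_atom (Atom P ss)" and "\<not> ground_atom (Atom P rs)"
    and "simple_atom (Atom P ss)" and "simple_atom (Atom P rs)"
    and "covering_atom (Atom P ss)" and "covering_atom (Atom P rs)"
    and "\<exists>t\<in>subterms_atom (Atom P ss). is_compound t"
    and "\<exists>t\<in>subterms_atom (Atom P rs). is_compound t"
    and "unifiable_atoms (Atom P ss) (Atom P rs)"
  shows "\<forall>j\<in>{1..k}. is_compound (ss ! (j - 1)) \<longleftrightarrow> is_compound (rs ! (j - 1))"
proof
  fix j assume j: "j \<in> {1..k}"
  obtain \<sigma> where eq: "map (subst_trm \<sigma>) ss = map (subst_trm \<sigma>) rs"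
    using assms(11) by (auto simp: unifiable_atoms_def)
  have jl: "j - 1 < length ss" "j - 1 < length rs" using j assms(1,2) by auto
  show "is_compound (ss ! (j - 1)) \<longleftrightarrow> is_compound (rs ! (j - 1))"
  proof
    assume "is_compound (ss ! (j - 1))"
    then show "is_compound (rs ! (j - 1))"
      using asym[of ss rs P \<sigma> "j-1"] assms eq jl by simp
  next
    assume "is_compound (rs ! (j - 1))"
    then show "is_compound (ss ! (j - 1))"
      using asym[of rs ss P \<sigma> "j-1"] assms eq jl by simp
  qed
qed

end
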